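(* Let $n\geq 2$, $1\leq k\leq n-1$ and $w=w_1\cdots w_n\in\mathfrak{S}_n$. Let $\gamma=w_i\cdots w_j$ and $\delta=w_{i'}\cdots w_{j'}$ each be a maximal $k$-ascending section or a maximal $k$-descending section of $w$. If $j<i'$, then there is a $k$-up or a $k$-down in $w_jw_{j+1}\cdots w_{i'}$.
   Context: $\mathfrak{S}_n$ is the set of permutations $w=w_1\cdots w_n$ of $\{1,\dots,n\}$. A section of $w$ is a consecutive block $w_sw_{s+1}\cdots w_t$ ($s\le t$). A section $w_s\cdots w_t$ is a $k$-up if $s<t$ and $w_t-w_s\geq k$, and a $k$-down if $s<t$ and $w_s-w_t\geq k$; a $k$-up/$k$-down "in" $w_a\cdots w_b$ means one $w_s\cdots w_t$ with $a\le s<t\le b$. A section $w_i\cdots w_j$ ($i<j$) is $k$-ascending if $w_i=\min\{w_i,\dots,w_j\}$, $w_j=\max\{w_i,\dots,w_j\}$, $w_j-w_i\geq k$, and there is no $k$-down in $w_i\cdots w_j$. It is $k$-descending if $w_i=\max\{w_i,\dots,w_j\}$, $w_j=\min\{w_i,\dots,w_j\}$, $w_i-w_j\geq k$, and there is no $k$-up in $w_i\cdots w_j$. A $k$-ascending (resp. $k$-descending) section is maximal if it is not contained in another $k$-ascending (resp. $k$-descending) section. *)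

theory Defs
  imports Main
begin

text \<open>A permutation w = w_1 ... w_n of {1..n} is modelled as a function
  w :: nat => nat that is a bijection from {1..n} onto {1..n};
  positions are 1-based, values outside {1..n} are irrelevant.\<close>

definition is_perm :: "nat \<Rightarrow> (nat \<Rightarrow> nat) \<Rightarrow> bool" where
  "is_perm n w \<longleftrightarrow> bij_betw w {1..n} {1..n}"

definition k_up :: "(nat \<Rightarrow> nat) \<Rightarrow> nat \<Rightarrow> nat \<Rightarrow> nat \<Rightarrow> bool" where
  "k_up w k s t \<longleftrightarrow> s < t \<and> int (w t) - int (w s) \<ge> int k"

definition k_down :: "(nat \<Rightarrow> nat) \<Rightarrow> nat \<Rightarrow> nat \<Rightarrow> nat \<Rightarrow> bool" where
  "k_down w k s t \<longleftrightarrow> s < t \<and> int (w s) - int (w t) \<ge> int k"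

definition has_k_up_in :: "(nat \<Rightarrow> nat) \<Rightarrow> nat \<Rightarrow> nat \<Rightarrow> nat \<Rightarrow> bool" where
  "has_k_up_in w k a b \<longleftrightarrow> (\<exists>s t. a \<le> s \<and> s < t \<and> t \<le> b \<and> k_up w k s t)"

definition has_k_down_in :: "(nat \<Rightarrow> nat) \<Rightarrow> nat \<Rightarrow> nat \<Rightarrow> nat \<Rightarrow> bool" where
  "has_k_down_in w k a b \<longleftrightarrow> (\<exists>s t. a \<le> s \<and> s < t \<and> t \<le> b \<and> k_down w k s t)"

definition k_ascending :: "nat \<Rightarrow> (nat \<Rightarrow> nat) \<Rightarrow> nat \<Rightarrow> nat \<Rightarrow> nat \<Rightarrow> bool" where
  "k_ascending n w k i j \<longleftrightarrow> 1 \<le> i \<and> i < j \<and> j \<le> n \<and>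
     w i = Min (w ` {i..j}) \<and> w j = Max (w ` {i..j}) \<and>
     int (w j) - int (w i) \<ge> int k \<and> \<not> has_k_down_in w k i j"

definition k_descending :: "nat \<Rightarrow> (nat \<Rightarrow> nat) \<Rightarrow> nat \<Rightarrow> nat \<Rightarrow> nat \<Rightarrow> bool" where
  "k_descending n w k i j \<longleftrightarrow> 1 \<le> i \<and> i < j \<and> j \<le> n \<and>
     w i = Max (w ` {i..j}) \<and> w j = Min (w ` {i..j}) \<and>
     int (w i) - int (w j) \<ge> int k \<and> \<not> has_k_up_in w k i j"

definition max_k_ascending :: "nat \<Rightarrow> (nat \<Rightarrow> nat) \<Rightarrow> nat \<Rightarrow> nat \<Rightarrow> nat \<Rightarrow> bool" where
  "max_k_ascending n w k i j \<longleftrightarrow> k_ascending n w k i j \<and>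
     \<not> (\<exists>i' j'. i' \<le> i \<and> j \<le> j' \<and> (i', j') \<noteq> (i, j) \<and> k_ascending n w k i' j')"

definition max_k_descending :: "nat \<Rightarrow> (nat \<Rightarrow> nat) \<Rightarrow> nat \<Rightarrow> nat \<Rightarrow> nat \<Rightarrow> bool" where
  "max_k_descending n w k i j \<longleftrightarrow> k_descending n w k i j \<and>
     \<not> (\<exists>i' j'. i' \<le> i \<and> j \<le> j' \<and> (i', j') \<noteq> (i, j) \<and> k_descending n w k i' j')"

end

theory Submission
  imports Defs
begin

definition A :: "(nat \<Rightarrow> int) \<Rightarrow> int \<Rightarrow> nat \<Rightarrow> nat \<Rightarrow> bool" where
"A f K i j \<longleftrightarrow> i<j \<and> (\<forall>x\<in>{i..j}. f i \<le> f x \<and> f x \<le> f j) \<and> K \<le> f j - f i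
   \<and> (\<forall>s t. i\<le>s \<longrightarrow> s<t \<longrightarrow> t\<le>j \<longrightarrow> f s - f t < K)"

definition NUD :: "(nat \<Rightarrow> int) \<Rightarrow> int \<Rightarrow> nat \<Rightarrow> nat \<Rightarrow> bool" where
"NUD f K j i' \<longleftrightarrow> (\<forall>s t. j\<le>s \<longrightarrow> s<t \<longrightarrow> t\<le>i' \<longrightarrow> f t - f s < K \<and> f s - f t < K)"

lemma A_lt: "A f K i j \<Longrightarrow> i < j" unfolding A_def by blast
lemma A_bnd: "A f K i j \<Longrightarrow> i \<le> x \<Longrightarrow> x \<le> j \<Longrightarrow> f i \<le> f x \<and> f x \<le> f j"
  unfolding A_def by auto
lemma A_K: "A f K i j \<Longrightarrow> K \<le> f j - f i" unfolding A_def by blast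
lemma A_nd: "A f K i j \<Longrightarrow> i \<le> s \<Longrightarrow> s < t \<Longrightarrow> t \<le> j \<Longrightarrow> f s - f t < K"
  unfolding A_def by blast
lemma NUD_D: "NUD f K j i' \<Longrightarrow> j \<le> s \<Longrightarrow> s < t \<Longrightarrow> t \<le> i' \<Longrightarrow> f t - f s < K \<and> f s - f t < K"
  unfolding NUD_def by blast
lemma A_I: "i < j \<Longrightarrow> (\<And>x. i \<le> x \<Longrightarrow> x \<le> j \<Longrightarrow> f i \<le> f x \<and> f x \<le> f j) \<Longrightarrow> K \<le> f j - f i
  \<Longrightarrow> (\<And>s t. i \<le> s \<Longrightarrow> s < t \<Longrightarrow> t \<le> j \<Longrightarrow> f s - f t < K) \<Longrightarrow> A f K i j"
  unfolding A_def by auto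

lemma L1:
  assumes a: "A f K i j" and "j < i'" and nud: "NUD f K j i'" and "j < t" "t \<le> i'" "f t > f j" "0 < K"
  shows "\<exists>t'. j < t' \<and> t' \<le> i' \<and> A f K i t'"
proof -
  let ?S = "{j<..i'}"
  have fin: "finite (f ` ?S)" and ne: "f ` ?S \<noteq> {}" using assms(2) by auto
  obtain t' where t': "t' \<in> ?S" "f t' = Max (f ` ?S)" using Max_in[OF fin ne] by auto
  have mx: "\<And>x. x \<in> ?S \<Longrightarrow> f x \<le> f t'" using t' fin by simp
  have ftt: "f t \<le> f t'" using mx assms(4,5) by simp
  have ij: "i < j" using A_lt[OF a] .
  have Kj: "K \<le> f j - f i" using A_K[OF a] .
  have "A f K i t'"
  proof (rule A_I)
    show "i < t'" using ij t' by auto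
  next
    fix x assume x: "i \<le> x" "x \<le> t'"
    show "f i \<le> f x \<and> f x \<le> f t'"
    proof (cases "x \<le> j")
      case True thus ?thesis using A_bnd[OF a x(1) True] ftt assms(6) by linarith
    next
      case False
      hence xs: "x \<in> ?S" using x t' by auto
      have "f j - f x < K" using NUD_D[OF nud, of j x] x False t' by auto
      thus ?thesis using mx[OF xs] Kj by linarith
    qed
  next
    show "K \<le> f t' - f i" using Kj ftt assms(6) by linarith
  next
    fix s u assume h: "i \<le> s" "s < u" "u \<le> t'"
    show "f s - f u < K"
    proof (cases "u \<le> j")
      case True show ?thesis using A_nd[OF a h(1,2) True] by blast
    next
      case F: False
      show ?thesis
      proof (cases "j \<le> s")
        case True thus ?thesis using NUD_D[OF nud True h(2)] h t' by auto
      next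
        case False
        have "f s \<le> f j" using A_bnd[OF a h(1)] False by auto
        moreover have "f j - f u < K" using NUD_D[OF nud, of j u] h t' F by auto
        ultimately show ?thesis by linarith
      qed
    qed
  qed
  thus ?thesis using t' by auto
qed

lemma L2:
  assumes a: "A f K i' j'" and "j < i'" and nud: "NUD f K j i'" and "j \<le> t" "t < i'" "f t < f i'" "0 < K"
  shows "\<exists>t'. j \<le> t' \<and> t' < i' \<and> A f K t' j'"
proof -
  let ?S = "{j..<i'}"
  have fin: "finite (f ` ?S)" and ne: "f ` ?S \<noteq> {}" using assms(2) by auto
  obtain t' where t': "t' \<in> ?S" "f t' = Min (f ` ?S)" using Min_in[OF fin ne] by auto
  have mn: "\<And>x. x \<in> ?S \<Longrightarrow> f t' \<le> f x" using t' fin by simp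
  have ftt: "f t' \<le> f t" using mn assms(4,5) by simp
  have ij: "i' < j'" using A_lt[OF a] .
  have Kj: "K \<le> f j' - f i'" using A_K[OF a] .
  have "A f K t' j'"
  proof (rule A_I)
    show "t' < j'" using ij t' by auto
  next
    fix x assume x: "t' \<le> x" "x \<le> j'"
    show "f t' \<le> f x \<and> f x \<le> f j'"
    proof (cases "i' \<le> x")
      case True thus ?thesis using A_bnd[OF a True x(2)] ftt assms(6) by linarith
    next
      case False
      hence xs: "x \<in> ?S" using x t' by auto
      have "f x - f i' < K" using NUD_D[OF nud, of x i'] xs by auto
      thus ?thesis using mn[OF xs] Kj by linarith
    qed
  next
    show "K \<le> f j' - f t'" using Kj ftt assms(6) by linarith
  next
    fix s u assume h: "t' \<le> s" "s < u" "u \<le> j'"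
    show "f s - f u < K"
    proof (cases "i' \<le> s")
      case True show ?thesis using A_nd[OF a True h(2,3)] by blast
    next
      case F: False
      show ?thesis
      proof (cases "u \<le> i'")
        case True thus ?thesis using NUD_D[OF nud _ h(2) True] h t' by auto
      next
        case False
        have "f i' \<le> f u" using A_bnd[OF a _ h(3)] False by auto
        moreover have "f s - f i' < K" using NUD_D[OF nud, of s i'] h t' F by auto
        ultimately show ?thesis by linarith
      qed
    qed
  qed
  thus ?thesis using t' by auto
qed

lemma L3:
  assumes a1: "A f K i j" and a2: "A f K i' j'" and ji: "j < i'" and nud: "NUD f K j i'" and "0 < K"
    and H: "\<forall>t\<in>{j..i'}. f t \<le> f j \<and> f i' \<le> f t"
  shows "A f K i j'"
proof -
  have a: "f j - f i' < K" using NUD_D[OF nud order_refl ji order_refl] by auto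
  have b: "K \<le> f j - f i" "K \<le> f j' - f i'" "i < j" "i' < j'"
    using A_K[OF a1] A_K[OF a2] A_lt[OF a1] A_lt[OF a2] by auto
  have Hx: "f x \<le> f j \<and> f i' \<le> f x" if "j \<le> x" "x \<le> i'" for x using H that by auto
  show ?thesis
  proof (rule A_I)
    show "i < j'" using b ji by auto
  next
    fix x assume x: "i \<le> x" "x \<le> j'"
    show "f i \<le> f x \<and> f x \<le> f j'"
    proof (cases "x \<le> j")
      case True thus ?thesis using A_bnd[OF a1 x(1) True] a b by linarith
    next
      case F: False
      show ?thesis
      proof (cases "x \<le> i'")
        case True thus ?thesis using Hx[of x] F a b by auto
      next
        case False thus ?thesis using A_bnd[OF a2 _ x(2)] a b by auto
      qed
    qed
  next
    show "K \<le> f j' - f i" using a b by linarith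
  next
    fix s u assume h: "i \<le> s" "s < u" "u \<le> j'"
    have fj: "f s \<le> f j" if "s \<le> j" using A_bnd[OF a1 h(1) that] by auto
    have fi: "f i' \<le> f u" if "i' \<le> u" using A_bnd[OF a2 that h(3)] by auto
    show "f s - f u < K"
    proof (cases "u \<le> j")
      case True show ?thesis using A_nd[OF a1 h(1,2) True] by blast
    next
      case F1: False
      show ?thesis
      proof (cases "i' \<le> s")
        case True show ?thesis using A_nd[OF a2 True h(2,3)] by blast
      next
        case F2: False
        show ?thesis
        proof (cases "s \<le> j")
          case sj: True
          show ?thesis
          proof (cases "u \<le> i'")
            case True
            have "f j - f u < K" using NUD_D[OF nud, of j u] F1 True by auto
            thus ?thesis using fj[OF sj] by linarith
          next
            case False thus ?thesis using fj[OF sj] fi a by auto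
          qed
        next
          case sj: False
          show ?thesis
          proof (cases "u \<le> i'")
            case True thus ?thesis using NUD_D[OF nud _ h(2) True] sj by auto
          next
            case False
            have "f s - f i' < K" using NUD_D[OF nud, of s i'] sj F2 by auto
            thus ?thesis using fi False by auto
          qed
        qed
      qed
    qed
  qed
qed

lemma Min_char: assumes ab: "(a::nat) \<le> b" shows "(w a = Min (w ` {a..b})) \<longleftrightarrow> (\<forall>x\<in>{a..b}. w a \<le> w x)"
proof
  assume e: "w a = Min (w ` {a..b})"
  show "\<forall>x\<in>{a..b}. w a \<le> w x"
  proof
    fix x assume x: "x \<in> {a..b}"
    have "w x \<in> w ` {a..b}" using x by blast
    from Min_le[OF _ this] e show "w a \<le> w x" by simp
  qed
next
  assume h: "\<forall>x\<in>{a..b}. w a \<le> w x"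
  show "w a = Min (w ` {a..b})"
    by (rule Min_eqI[symmetric]) (use h ab in auto)
qed

lemma Max_char: assumes ab: "(a::nat) \<le> b" shows "(w b = Max (w ` {a..b})) \<longleftrightarrow> (\<forall>x\<in>{a..b}. w x \<le> w b)"
proof
  assume e: "w b = Max (w ` {a..b})"
  show "\<forall>x\<in>{a..b}. w x \<le> w b"
  proof
    fix x assume x: "x \<in> {a..b}"
    have "w x \<in> w ` {a..b}" using x by blast
    from Max_ge[OF _ this] e show "w x \<le> w b" by simp
  qed
next
  assume h: "\<forall>x\<in>{a..b}. w x \<le> w b"
  show "w b = Max (w ` {a..b})"
    by (rule Max_eqI[symmetric]) (use h ab in auto)
qed

lemma asc_eq: "k_ascending n w k i j \<longleftrightarrow> 1 \<le> i \<and> j \<le> n \<and> A (\<lambda>x. int (w x)) (int k) i j"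
proof
  assume h: "k_ascending n w k i j"
  hence "i \<le> j" unfolding k_ascending_def by auto
  thus "1 \<le> i \<and> j \<le> n \<and> A (\<lambda>x. int (w x)) (int k) i j"
    using h unfolding k_ascending_def A_def has_k_down_in_def k_down_def
    by (auto simp: Min_char Max_char not_le) (meson leD)
next
  assume h: "1 \<le> i \<and> j \<le> n \<and> A (\<lambda>x. int (w x)) (int k) i j"
  hence "i \<le> j" unfolding A_def by auto
  thus "k_ascending n w k i j"
    using h unfolding k_ascending_def A_def has_k_down_in_def k_down_def
    by (auto simp: Min_char Max_char not_le) (meson not_le leD)
qed

lemma Max_char2: assumes ab: "(a::nat) \<le> b" shows "(w a = Max (w ` {a..b})) \<longleftrightarrow> (\<forall>x\<in>{a..b}. w x \<le> w a)"
proof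
  assume e: "w a = Max (w ` {a..b})"
  show "\<forall>x\<in>{a..b}. w x \<le> w a"
  proof
    fix x assume x: "x \<in> {a..b}"
    have "w x \<in> w ` {a..b}" using x by blast
    from Max_ge[OF _ this] e show "w x \<le> w a" by simp
  qed
next
  assume h: "\<forall>x\<in>{a..b}. w x \<le> w a"
  show "w a = Max (w ` {a..b})"
    by (rule Max_eqI[symmetric]) (use h ab in auto)
qed

lemma Min_char2: assumes ab: "(a::nat) \<le> b" shows "(w b = Min (w ` {a..b})) \<longleftrightarrow> (\<forall>x\<in>{a..b}. w b \<le> w x)"
proof
  assume e: "w b = Min (w ` {a..b})"
  show "\<forall>x\<in>{a..b}. w b \<le> w x"
  proof
    fix x assume x: "x \<in> {a..b}"
    have "w x \<in> w ` {a..b}" using x by blast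
    from Min_le[OF _ this] e show "w b \<le> w x" by simp
  qed
next
  assume h: "\<forall>x\<in>{a..b}. w b \<le> w x"
  show "w b = Min (w ` {a..b})"
    by (rule Min_eqI[symmetric]) (use h ab in auto)
qed

lemma desc_eq: "k_descending n w k i j \<longleftrightarrow> 1 \<le> i \<and> j \<le> n \<and> A (\<lambda>x. - int (w x)) (int k) i j"
proof
  assume h: "k_descending n w k i j"
  hence "i \<le> j" unfolding k_descending_def by auto
  thus "1 \<le> i \<and> j \<le> n \<and> A (\<lambda>x. - int (w x)) (int k) i j"
    using h unfolding k_descending_def A_def has_k_up_in_def k_up_def
    by (auto simp: Min_char2 Max_char2 not_le) (meson leD)
next
  assume h: "1 \<le> i \<and> j \<le> n \<and> A (\<lambda>x. - int (w x)) (int k) i j"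
  hence "i \<le> j" unfolding A_def by auto
  thus "k_descending n w k i j"
    using h unfolding k_descending_def A_def has_k_up_in_def k_up_def
    by (auto simp: Min_char2 Max_char2 not_le) (meson not_le leD)
qed
lemma HL1:
  assumes "A f K i j" "NUD f K j i'" "j < i'" "0 < K"
    "\<And>t'. j < t' \<Longrightarrow> t' \<le> i' \<Longrightarrow> A f K i t' \<Longrightarrow> False"
  shows "\<forall>t\<in>{j<..i'}. f t \<le> f j"
proof
  fix t assume t: "t \<in> {j<..i'}"
  show "f t \<le> f j"
  proof (rule ccontr)
    assume "\<not> f t \<le> f j"
    then obtain t' where "j < t'" "t' \<le> i'" "A f K i t'" using L1[OF assms(1,3,2)] t assms(4) by force
    thus False using assms(5) by blast
  qed
qed

lemma HL2:
  assumes "A f K i' j'" "NUD f K j i'" "j < i'" "0 < K"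
    "\<And>t'. j \<le> t' \<Longrightarrow> t' < i' \<Longrightarrow> A f K t' j' \<Longrightarrow> False"
  shows "\<forall>t\<in>{j..<i'}. f i' \<le> f t"
proof
  fix t assume t: "t \<in> {j..<i'}"
  show "f i' \<le> f t"
  proof (rule ccontr)
    assume "\<not> f i' \<le> f t"
    then obtain t' where "j \<le> t'" "t' < i'" "A f K t' j'" using L2[OF assms(1,3,2)] t assms(4) by force
    thus False using assms(5) by blast
  qed
qed

theorem lemma2p7:
  fixes n k :: nat and w :: "nat \<Rightarrow> nat" and i j i' j' :: nat
  assumes "n \<ge> 2" and "1 \<le> k" and "k \<le> n - 1"
    and "is_perm n w"
    and "max_k_ascending n w k i j \<or> max_k_descending n w k i j"
    and "max_k_ascending n w k i' j' \<or> max_k_descending n w k i' j'"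
    and "j < i'"
  shows "has_k_up_in w k j i' \<or> has_k_down_in w k j i'"
proof (rule ccontr)
  assume nn: "\<not> (has_k_up_in w k j i' \<or> has_k_down_in w k j i')"
  define f where "f = (\<lambda>x. int (w x))"
  define g where "g = (\<lambda>x. - int (w x))"
  define K where "K = int k"
  have K0: "0 < K" using assms(2) K_def by simp
  have NF: "NUD f K j i'" using nn unfolding NUD_def f_def K_def has_k_up_in_def has_k_down_in_def
      k_up_def k_down_def by (auto simp: not_le) (meson not_le leD)+
  have NG: "NUD g K j i'" using nn unfolding NUD_def g_def K_def has_k_up_in_def has_k_down_in_def
      k_up_def k_down_def by (auto simp: not_le) (meson not_le leD)+
  have jpos: "1 \<le> j" and i'n: "i' \<le> n" and i'j': "i' < j'"
    using assms(5,6,7) unfolding max_k_ascending_def max_k_descending_def k_ascending_def k_descending_def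
    by auto
  have inj: "inj_on w {1..n}" using assms(4) unfolding is_perm_def bij_betw_def by simp
  have wne: "w j \<noteq> w i'"
    using inj_onD[OF inj, of j i'] jpos i'n assms(7) by auto
  have PA1: "\<forall>t\<in>{j<..i'}. f t \<le> f j" if m: "max_k_ascending n w k i j"
  proof -
    have a: "A f K i j" "1 \<le> i" using m unfolding max_k_ascending_def asc_eq f_def K_def by auto
    show ?thesis
    proof (rule HL1[OF a(1) NF assms(7) K0])
      fix t' assume "j < t'" "t' \<le> i'" "A f K i t'"
      hence kk: "k_ascending n w k i t'" using a(2) i'n unfolding asc_eq f_def K_def by auto
      from m have "\<not> (i \<le> i \<and> j \<le> t' \<and> (i, t') \<noteq> (i, j) \<and> k_ascending n w k i t')" unfolding max_k_ascending_def by blast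
      thus False using kk \<open>j < t'\<close> by auto
    qed
  qed
  have PD1: "\<forall>t\<in>{j<..i'}. g t \<le> g j" if m: "max_k_descending n w k i j"
  proof -
    have a: "A g K i j" "1 \<le> i" using m unfolding max_k_descending_def desc_eq g_def K_def by auto
    show ?thesis
    proof (rule HL1[OF a(1) NG assms(7) K0])
      fix t' assume "j < t'" "t' \<le> i'" "A g K i t'"
      hence kk: "k_descending n w k i t'" using a(2) i'n unfolding desc_eq g_def K_def by auto
      from m have "\<not> (i \<le> i \<and> j \<le> t' \<and> (i, t') \<noteq> (i, j) \<and> k_descending n w k i t')" unfolding max_k_descending_def by blast
      thus False using kk \<open>j < t'\<close> by auto
    qed
  qed
  have PA2: "\<forall>t\<in>{j..<i'}. f i' \<le> f t" if m: "max_k_ascending n w k i' j'"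
  proof -
    have a: "A f K i' j'" "j' \<le> n" using m unfolding max_k_ascending_def asc_eq f_def K_def by auto
    show ?thesis
    proof (rule HL2[OF a(1) NF assms(7) K0])
      fix t' assume "j \<le> t'" "t' < i'" "A f K t' j'"
      hence kk: "k_ascending n w k t' j'" using a(2) jpos unfolding asc_eq f_def K_def by auto
      from m have "\<not> (t' \<le> i' \<and> j' \<le> j' \<and> (t', j') \<noteq> (i', j') \<and> k_ascending n w k t' j')" unfolding max_k_ascending_def by blast
      thus False using kk \<open>t' < i'\<close> by auto
    qed
  qed
  have PD2: "\<forall>t\<in>{j..<i'}. g i' \<le> g t" if m: "max_k_descending n w k i' j'"
  proof -
    have a: "A g K i' j'" "j' \<le> n" using m unfolding max_k_descending_def desc_eq g_def K_def by auto
    show ?thesis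
    proof (rule HL2[OF a(1) NG assms(7) K0])
      fix t' assume "j \<le> t'" "t' < i'" "A g K t' j'"
      hence kk: "k_descending n w k t' j'" using a(2) jpos unfolding desc_eq g_def K_def by auto
      from m have "\<not> (t' \<le> i' \<and> j' \<le> j' \<and> (t', j') \<noteq> (i', j') \<and> k_descending n w k t' j')" unfolding max_k_descending_def by blast
      thus False using kk \<open>t' < i'\<close> by auto
    qed
  qed
  have H: "\<forall>t\<in>{j..i'}. h t \<le> h j \<and> h i' \<le> h t"
    if "\<forall>t\<in>{j<..i'}. h t \<le> h j" "\<forall>t\<in>{j..<i'}. h i' \<le> h t" for h :: "nat \<Rightarrow> int"
  proof
    fix t assume t: "t \<in> {j..i'}"
    show "h t \<le> h j \<and> h i' \<le> h t"
    proof
      show "h t \<le> h j" using that(1) t by (cases "t = j") auto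
      show "h i' \<le> h t" using that(2) t by (cases "t = i'") auto
    qed
  qed
  show False
    using assms(5)
  proof
    assume m1: "max_k_ascending n w k i j"
    show False using assms(6)
    proof
      assume m2: "max_k_ascending n w k i' j'"
      have a1: "A f K i j" "1 \<le> i" using m1 unfolding max_k_ascending_def asc_eq f_def K_def by auto
      have a2: "A f K i' j'" "j' \<le> n" using m2 unfolding max_k_ascending_def asc_eq f_def K_def by auto
      have "A f K i j'" using L3[OF a1(1) a2(1) assms(7) NF K0 H[OF PA1[OF m1] PA2[OF m2]]] .
      hence kk: "k_ascending n w k i j'" using a1(2) a2(2) unfolding asc_eq f_def K_def by auto
      from m1 have "\<not> (i \<le> i \<and> j \<le> j' \<and> (i, j') \<noteq> (i, j) \<and> k_ascending n w k i j')" unfolding max_k_ascending_def by blast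
      thus False using kk assms(7) i'j' by auto
    next
      assume m2: "max_k_descending n w k i' j'"
      have "f i' \<le> f j" using PA1[OF m1] assms(7) by auto
      moreover have "g i' \<le> g j" using PD2[OF m2] assms(7) by auto
      ultimately show False using wne unfolding f_def g_def by simp
    qed
  next
    assume m1: "max_k_descending n w k i j"
    show False using assms(6)
    proof
      assume m2: "max_k_descending n w k i' j'"
      have a1: "A g K i j" "1 \<le> i" using m1 unfolding max_k_descending_def desc_eq g_def K_def by auto
      have a2: "A g K i' j'" "j' \<le> n" using m2 unfolding max_k_descending_def desc_eq g_def K_def by auto
      have "A g K i j'" using L3[OF a1(1) a2(1) assms(7) NG K0 H[OF PD1[OF m1] PD2[OF m2]]] .
      hence kk: "k_descending n w k i j'" using a1(2) a2(2) unfolding desc_eq g_def K_def by auto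
      from m1 have "\<not> (i \<le> i \<and> j \<le> j' \<and> (i, j') \<noteq> (i, j) \<and> k_descending n w k i j')" unfolding max_k_descending_def by blast
      thus False using kk assms(7) i'j' by auto
    next
      assume m2: "max_k_ascending n w k i' j'"
      have "g i' \<le> g j" using PD1[OF m1] assms(7) by auto
      moreover have "f i' \<le> f j" using PA2[OF m2] assms(7) by auto
      ultimately show False using wne unfolding f_def g_def by simp
    qed
  qed
qed

end
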